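(* Let $k$ be odd. A matching of size $k$ is an isolated vertex of $\mathbf{DCM}_k$ if and only if it is an I-matching.
   Context: Let $k\ge 1$ and let $X_{2k}=\{P_1,\dots,P_{2k}\}$ be $2k$ points in convex position in the plane, labeled in clockwise cyclic order; indices are taken modulo $2k$. A matching of $X_{2k}$ means a set of $k$ pairwise non-crossing straight segments (edges) with endpoints in $X_{2k}$ covering every point exactly once; its size is $k$. Two matchings $M,M'$ of $X_{2k}$ are disjoint compatible if they have no common edge and no edge of $M$ crosses an edge of $M'$. $\mathbf{DCM}_k$ is the graph whose vertices are the matchings of $X_{2k}$, two being adjacent iff they are disjoint compatible. A block of a matching $M$ is a pair of edges $\{P_iP_{i+3},P_{i+1}P_{i+2}\}\subseteq M$. If $K$ is a block of a matching $N$ of size $k+2$, then $N-K$ denotes the set $N\setminus K$, regarded as a matching of the remaining $2k$ points (which are in convex position) with their inherited cyclic order, i.e. as a matching of size $k$ defined up to cyclic relabeling. I-matchings are defined recursively: the unique matching of size $1$ is an I-matching; for odd $k\ge 3$, a matching $N$ of size $k$ is an I-matching iff it has a block $K$ such that $N-K$ is an I-matching (this notion is invariant under cyclic relabeling). *)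

theory Defs
  imports Main
begin

text \<open>Points of X_{2k} are labelled 0,...,2k-1 in (clockwise) cyclic order.  Two chords of a convex
  polygon with four distinct endpoints cross iff their endpoints interleave.\<close>

definition crosses :: "nat set \<Rightarrow> nat set \<Rightarrow> bool" where
  "crosses e f \<longleftrightarrow> (\<exists>a b c d. a < c \<and> c < b \<and> b < d \<and>
      ((e = {a,b} \<and> f = {c,d}) \<or> (e = {c,d} \<and> f = {a,b})))"

definition is_matching :: "nat \<Rightarrow> nat set set \<Rightarrow> bool" where
  "is_matching k M \<longleftrightarrow>
     (\<forall>e\<in>M. \<exists>a b. a \<noteq> b \<and> a < 2*k \<and> b < 2*k \<and> e = {a,b}) \<and>
     (\<forall>p<2*k. \<exists>!e. e \<in> M \<and> p \<in> e) \<and>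
     (\<forall>e\<in>M. \<forall>f\<in>M. \<not> crosses e f)"

definition disjoint_compatible :: "nat set set \<Rightarrow> nat set set \<Rightarrow> bool" where
  "disjoint_compatible M M' \<longleftrightarrow> M \<inter> M' = {} \<and> (\<forall>e\<in>M. \<forall>f\<in>M'. \<not> crosses e f)"

definition isolated_DCM :: "nat \<Rightarrow> nat set set \<Rightarrow> bool" where
  "isolated_DCM k M \<longleftrightarrow> is_matching k M \<and>
     \<not> (\<exists>M'. is_matching k M' \<and> disjoint_compatible M M')"

definition block_edges :: "nat \<Rightarrow> nat \<Rightarrow> nat set set" where
  "block_edges k i = {{i mod (2*k), (i+3) mod (2*k)}, {(i+1) mod (2*k), (i+2) mod (2*k)}}"

text \<open>Relabelling of the remaining 2k-4 points after deleting the points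
  i,i+1,i+2,i+3: point i+4+j (mod 2k) becomes j, followed by an arbitrary
  cyclic rotation by s (so N-K is taken up to cyclic relabelling).\<close>
definition shrink :: "nat \<Rightarrow> nat \<Rightarrow> nat \<Rightarrow> nat \<Rightarrow> nat" where
  "shrink k i s p = ((p + 4*k - i - 4) mod (2*k) + s) mod (2*k - 4)"

definition remove_block :: "nat \<Rightarrow> nat \<Rightarrow> nat \<Rightarrow> nat set set \<Rightarrow> nat set set" where
  "remove_block k i s N = (\<lambda>e. shrink k i s ` e) ` (N - block_edges k i)"

inductive I_matching :: "nat \<Rightarrow> nat set set \<Rightarrow> bool" where
  base: "I_matching 1 {{0,1}}"
| step: "\<lbrakk> odd k; k \<ge> 3; is_matching k N; i < 2*k; block_edges k i \<subseteq> N;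
           I_matching (k - 2) (remove_block k i s N) \<rbrakk> \<Longrightarrow> I_matching k N"

end

theory Submission
  imports Defs
begin


lemma cr0: "w<y \<Longrightarrow> y<x \<Longrightarrow> x<z \<Longrightarrow> crosses {w,x} {y,z}"
  unfolding crosses_def by blast
lemma crosses_sym: "crosses e f \<longleftrightarrow> crosses f e"
  unfolding crosses_def by blast
lemma cr1: "w<y \<Longrightarrow> y<x \<Longrightarrow> x<z \<Longrightarrow> crosses {w,x} {y,z} \<and> crosses {x,w} {y,z} \<and> crosses {w,x} {z,y} \<and> crosses {x,w} {z,y}
   \<and> crosses {y,z} {w,x} \<and> crosses {y,z} {x,w} \<and> crosses {z,y} {w,x} \<and> crosses {z,y} {x,w}"
  using cr0[of w y x z] crosses_sym by (simp add: insert_commute)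
lemma crosses_iff: "crosses {a,b} {c,d} \<longleftrightarrow>
  (a<c\<and>c<b\<and>b<d) \<or> (b<c\<and>c<a\<and>a<d) \<or> (a<d\<and>d<b\<and>b<c) \<or> (b<d\<and>d<a\<and>a<c) \<or>
  (c<a\<and>a<d\<and>d<b) \<or> (d<a\<and>a<c\<and>c<b) \<or> (c<b\<and>b<d\<and>d<a) \<or> (d<b\<and>b<c\<and>c<a)"
  (is "?L \<longleftrightarrow> ?R")
proof
  assume ?L
  then obtain w x y z where o: "w<y" "y<x" "x<z" and
    h: "({a,b}={w,x} \<and> {c,d}={y,z}) \<or> ({a,b}={y,z} \<and> {c,d}={w,x})"
    unfolding crosses_def by blast
  from h show ?R
  proof
    assume "{a,b}={w,x} \<and> {c,d}={y,z}"
    then show ?R using o unfolding doubleton_eq_iff by auto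
  next
    assume "{a,b}={y,z} \<and> {c,d}={w,x}"
    then show ?R using o unfolding doubleton_eq_iff by auto
  qed
next
  assume ?R
  then show ?L
    apply (elim disjE conjE)
    using cr1 by blast+
qed


definition btw :: "nat \<Rightarrow> nat \<Rightarrow> nat \<Rightarrow> bool" where "btw x a b \<longleftrightarrow> min a b < x \<and> x < max a b"

lemma crosses_lt: "a<b \<Longrightarrow> crosses {a,b} {c,d} \<longleftrightarrow> c\<noteq>d \<and> c\<noteq>a \<and> c\<noteq>b \<and> d\<noteq>a \<and> d\<noteq>b \<and> ((a<c \<and> c<b) \<noteq> (a<d \<and> d<b))"
  unfolding crosses_iff by (cases c a rule: linorder_cases; cases c b rule: linorder_cases; cases d a rule: linorder_cases; cases d b rule: linorder_cases; simp)

lemma crosses_btw: "crosses {a,b} {c,d} \<longleftrightarrow> a\<noteq>b \<and> c\<noteq>d \<and> c\<noteq>a \<and> c\<noteq>b \<and> d\<noteq>a \<and> d\<noteq>b \<and> (btw c a b \<noteq> btw d a b)"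
proof (cases a b rule: linorder_cases)
  case less
  then show ?thesis using crosses_lt[OF less] unfolding btw_def by auto
next
  case equal
  then show ?thesis unfolding crosses_iff by auto
next
  case greater
  then show ?thesis using crosses_lt[OF greater, of c d] unfolding btw_def by (auto simp: insert_commute)
qed

lemma rot_btw:
  assumes "x<n" "a<n" "b<n" "x\<noteq>a" "x\<noteq>b" "r' < n"
  shows "btw (if x + r' < n then x + r' else x + r' - n) (if a + r' < n then a + r' else a + r' - n) (if b + r' < n then b + r' else b + r' - n)
     \<longleftrightarrow> (btw x a b \<noteq> ((a + r' < n) \<noteq> (b + r' < n)))"
  using assms unfolding btw_def
  by (cases "x + r' < n"; cases "a + r' < n"; cases "b + r' < n"; simp; linarith)

lemma rot_cross:
  assumes "a<n" "b<n" "c<n" "d<n"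
  shows "crosses {(a+r) mod n, (b+r) mod n} {(c+r) mod n, (d+r) mod n} \<longleftrightarrow> crosses {a,b} {c,d}"
proof -
  have n: "n > 0" using assms by auto
  define r' where "r' = r mod n"
  have r': "r' < n" unfolding r'_def using n by simp
  define R where "R x = (if x + r' < n then x + r' else x + r' - n)" for x
  have h: "\<And>x. x < n \<Longrightarrow> (x + r) mod n = R x"
  proof -
    fix x assume "x < n"
    have "(x + r) mod n = (x + r') mod n" unfolding r'_def by (simp add: mod_add_right_eq)
    then show "(x + r) mod n = R x"
      using \<open>x<n\<close> r' unfolding R_def by (auto simp: mod_if le_mod_geq)
  qed
  have inj: "\<And>x y. x<n \<Longrightarrow> y<n \<Longrightarrow> R x = R y \<longleftrightarrow> x = y"
    unfolding R_def using r' by auto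
  have hb: "\<And>x a b. x<n \<Longrightarrow> a<n \<Longrightarrow> b<n \<Longrightarrow> x\<noteq>a \<Longrightarrow> x\<noteq>b \<Longrightarrow>
     btw (R x) (R a) (R b) \<longleftrightarrow> (btw x a b \<noteq> ((a + r' < n) \<noteq> (b + r' < n)))"
    using rot_btw r' unfolding R_def by blast
  show ?thesis
  proof (cases "a \<noteq> b \<and> c \<noteq> d \<and> c \<noteq> a \<and> c \<noteq> b \<and> d \<noteq> a \<and> d \<noteq> b")
    case True
    then show ?thesis unfolding h[OF assms(1)] h[OF assms(2)] h[OF assms(3)] h[OF assms(4)] crosses_btw
      using hb[OF assms(3) assms(1) assms(2)] hb[OF assms(4) assms(1) assms(2)]
      inj[OF assms(1) assms(2)] inj[OF assms(3) assms(4)] inj[OF assms(3) assms(1)] inj[OF assms(3) assms(2)]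
      inj[OF assms(4) assms(1)] inj[OF assms(4) assms(2)] by (simp; blast)
  next
    case False
    then show ?thesis unfolding h[OF assms(1)] h[OF assms(2)] h[OF assms(3)] h[OF assms(4)] crosses_btw by auto
  qed
qed


definition pm :: "nat set \<Rightarrow> nat set set \<Rightarrow> bool" where
  "pm P M \<longleftrightarrow> (\<forall>e\<in>M. \<exists>a b. a \<noteq> b \<and> a \<in> P \<and> b \<in> P \<and> e = {a,b}) \<and>
     (\<forall>p\<in>P. \<exists>!e. e \<in> M \<and> p \<in> e) \<and> (\<forall>e\<in>M. \<forall>f\<in>M. \<not> crosses e f)"

definition rel :: "(nat \<Rightarrow> nat) \<Rightarrow> nat set set \<Rightarrow> nat set set" where
  "rel \<phi> M = (\<lambda>e. \<phi> ` e) ` M"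

definition cp :: "(nat \<Rightarrow> nat) \<Rightarrow> nat set \<Rightarrow> bool" where
  "cp \<phi> P \<longleftrightarrow> (\<forall>a\<in>P. \<forall>b\<in>P. \<forall>c\<in>P. \<forall>d\<in>P. crosses {\<phi> a, \<phi> b} {\<phi> c, \<phi> d} = crosses {a,b} {c,d})"

definition hp :: "nat set \<Rightarrow> nat set set \<Rightarrow> bool" where
  "hp P M \<longleftrightarrow> (\<exists>M'. pm P M' \<and> disjoint_compatible M M')"

lemma is_matching_pm: "is_matching k M = pm {..<2*k} M"
  unfolding is_matching_def pm_def Ball_def lessThan_iff by simp

lemma pm_edge: "pm P M \<Longrightarrow> e\<in>M \<Longrightarrow> \<exists>a b. a \<noteq> b \<and> a \<in> P \<and> b \<in> P \<and> e = {a,b}"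
  unfolding pm_def by blast
lemma pm_sub: "pm P M \<Longrightarrow> e\<in>M \<Longrightarrow> e \<subseteq> P"
  using pm_edge by blast
lemma pm_unique: assumes "pm P M" "e\<in>M" "f\<in>M" "p\<in>e" "p\<in>f" shows "e = f"
proof -
  have "p \<in> P" using pm_sub[OF assms(1,2)] assms(4) by blast
  then have "\<exists>!e. e \<in> M \<and> p \<in> e" using assms(1) unfolding pm_def by blast
  then show ?thesis using assms(2-5) by auto
qed
lemma pm_cover: "pm P M \<Longrightarrow> p\<in>P \<Longrightarrow> \<exists>e\<in>M. p\<in>e"
  unfolding pm_def by blast
lemma pm_nc: "pm P M \<Longrightarrow> e\<in>M \<Longrightarrow> f\<in>M \<Longrightarrow> \<not> crosses e f"
  unfolding pm_def by blast
lemma pmI: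
  assumes "\<And>e. e\<in>M \<Longrightarrow> \<exists>a b. a \<noteq> b \<and> a \<in> P \<and> b \<in> P \<and> e = {a,b}"
    and "\<And>p. p\<in>P \<Longrightarrow> \<exists>e\<in>M. p\<in>e"
    and "\<And>e f p. e\<in>M \<Longrightarrow> f\<in>M \<Longrightarrow> p\<in>e \<Longrightarrow> p\<in>f \<Longrightarrow> e = f"
    and "\<And>e f. e\<in>M \<Longrightarrow> f\<in>M \<Longrightarrow> \<not> crosses e f"
  shows "pm P M"
  unfolding pm_def
proof (intro conjI ballI)
  fix p assume "p \<in> P"
  then obtain e where "e\<in>M" "p\<in>e" using assms(2) by blast
  then show "\<exists>!e. e \<in> M \<and> p \<in> e" using assms(3) by (intro ex1I[of _ e]) auto
qed (use assms in blast)+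

lemma pm_union_pts: "pm P M \<Longrightarrow> \<Union>M = P"
  using pm_sub pm_cover by blast

lemma rel_pm:
  assumes b: "bij_betw \<phi> P Q" and c: "cp \<phi> P" and m: "pm P M"
  shows "pm Q (rel \<phi> M)"
proof (rule pmI)
  have inj: "inj_on \<phi> P" and img: "\<phi> ` P = Q" using b unfolding bij_betw_def by auto
  fix e assume "e \<in> rel \<phi> M"
  then obtain e0 where "e0\<in>M" "e = \<phi> ` e0" unfolding rel_def by auto
  then obtain a b where "a\<noteq>b" "a\<in>P" "b\<in>P" "e0={a,b}" using pm_edge[OF m] by blast
  then show "\<exists>a b. a \<noteq> b \<and> a \<in> Q \<and> b \<in> Q \<and> e = {a,b}"
    using \<open>e = \<phi> ` e0\<close> inj img by (intro exI[of _ "\<phi> a"] exI[of _ "\<phi> b"]) (auto simp: inj_on_eq_iff)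
next
  have inj: "inj_on \<phi> P" and img: "\<phi> ` P = Q" using b unfolding bij_betw_def by auto
  fix q assume "q\<in>Q"
  then obtain p where "p\<in>P" "q = \<phi> p" using img by auto
  then obtain e where "e\<in>M" "p\<in>e" using pm_cover[OF m] by blast
  then show "\<exists>e\<in>rel \<phi> M. q \<in> e" using \<open>q = \<phi> p\<close> unfolding rel_def by auto
next
  have inj: "inj_on \<phi> P" and img: "\<phi> ` P = Q" using b unfolding bij_betw_def by auto
  fix e f q assume "e \<in> rel \<phi> M" "f \<in> rel \<phi> M" "q\<in>e" "q\<in>f"
  then obtain e0 f0 where e0: "e0\<in>M" "e = \<phi> ` e0" and f0: "f0\<in>M" "f = \<phi> ` f0" unfolding rel_def by auto
  then obtain x y where "x\<in>e0" "y\<in>f0" "\<phi> x = q" "\<phi> y = q" using \<open>q\<in>e\<close> \<open>q\<in>f\<close> by auto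
  moreover have "x\<in>P" "y\<in>P" using pm_sub[OF m] e0 f0 \<open>x\<in>e0\<close> \<open>y\<in>f0\<close> by auto
  ultimately have "x = y" using inj by (auto simp: inj_on_eq_iff)
  then have "e0 = f0" using pm_unique[OF m e0(1) f0(1)] \<open>x\<in>e0\<close> \<open>y\<in>f0\<close> by auto
  then show "e = f" using e0 f0 by simp
next
  fix e f assume "e \<in> rel \<phi> M" "f \<in> rel \<phi> M"
  then obtain e0 f0 where e0: "e0\<in>M" "e = \<phi> ` e0" and f0: "f0\<in>M" "f = \<phi> ` f0" unfolding rel_def by auto
  obtain a b where ab: "a\<in>P" "b\<in>P" "e0={a,b}" using pm_edge[OF m e0(1)] by blast
  obtain c d where cd: "c\<in>P" "d\<in>P" "f0={c,d}" using pm_edge[OF m f0(1)] by blast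
  have "\<not> crosses {a,b} {c,d}" using pm_nc[OF m e0(1) f0(1)] ab cd by simp
  then show "\<not> crosses e f" using c ab cd e0 f0 unfolding cp_def by simp
qed

lemma rel_dc:
  assumes i: "inj_on \<phi> P" and c: "cp \<phi> P" and m: "pm P M" and m': "pm P M'"
    and d: "disjoint_compatible M M'"
  shows "disjoint_compatible (rel \<phi> M) (rel \<phi> M')"
  unfolding disjoint_compatible_def
proof (intro conjI ballI)
  show "rel \<phi> M \<inter> rel \<phi> M' = {}"
  proof (rule ccontr)
    assume "rel \<phi> M \<inter> rel \<phi> M' \<noteq> {}"
    then obtain e0 f0 where e0: "e0\<in>M" and f0: "f0\<in>M'" and eq: "\<phi> ` e0 = \<phi> ` f0" unfolding rel_def by auto
    have "e0 \<subseteq> P" "f0 \<subseteq> P" using pm_sub m m' e0 f0 by auto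
    then have "e0 = f0" using eq i by (simp add: inj_on_image_eq_iff)
    then show False using d e0 f0 unfolding disjoint_compatible_def by auto
  qed
next
  fix e f assume "e \<in> rel \<phi> M" "f \<in> rel \<phi> M'"
  then obtain e0 f0 where e0: "e0\<in>M" "e = \<phi> ` e0" and f0: "f0\<in>M'" "f = \<phi> ` f0" unfolding rel_def by auto
  obtain a b where ab: "a\<in>P" "b\<in>P" "e0={a,b}" using pm_edge[OF m e0(1)] by blast
  obtain c d where cd: "c\<in>P" "d\<in>P" "f0={c,d}" using pm_edge[OF m' f0(1)] by blast
  have "\<not> crosses {a,b} {c,d}" using d e0(1) f0(1) ab cd unfolding disjoint_compatible_def by simp
  then show "\<not> crosses e f" using c ab cd e0 f0 unfolding cp_def by simp
qed

lemma rel_rel: "rel \<psi> (rel \<phi> M) = rel (\<psi> \<circ> \<phi>) M"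
  unfolding rel_def by (simp add: image_image image_comp)

lemma rel_inv:
  assumes "bij_betw \<phi> P Q" "pm P M"
  shows "rel (inv_into P \<phi>) (rel \<phi> M) = M"
proof -
  have i: "inj_on \<phi> P" using assms unfolding bij_betw_def by auto
  have "\<And>e. e\<in>M \<Longrightarrow> inv_into P \<phi> ` \<phi> ` e = e"
    using pm_sub[OF assms(2)] i by (simp add: inv_into_image_cancel)
  then show ?thesis unfolding rel_def image_image by simp
qed

lemma cp_inv:
  assumes b: "bij_betw \<phi> P Q" and c: "cp \<phi> P"
  shows "cp (inv_into P \<phi>) Q"
  unfolding cp_def
proof (intro ballI)
  fix a b cc d assume h: "a\<in>Q" "b\<in>Q" "cc\<in>Q" "d\<in>Q"
  let ?\<psi> = "inv_into P \<phi>"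
  have "\<And>x. x\<in>Q \<Longrightarrow> ?\<psi> x \<in> P \<and> \<phi> (?\<psi> x) = x"
    using b by (meson bij_betw_apply bij_betw_inv_into bij_betw_inv_into_right)
  then show "crosses {?\<psi> a, ?\<psi> b} {?\<psi> cc, ?\<psi> d} = crosses {a,b} {cc,d}"
    using c h unfolding cp_def by metis
qed

lemma transfer:
  assumes b: "bij_betw \<phi> P Q" and c: "cp \<phi> P" and m: "pm P M"
  shows "hp P M \<longleftrightarrow> hp Q (rel \<phi> M)"
proof
  have i: "inj_on \<phi> P" using b unfolding bij_betw_def by auto
  assume "hp P M"
  then obtain M' where "pm P M'" "disjoint_compatible M M'" unfolding hp_def by auto
  then show "hp Q (rel \<phi> M)" unfolding hp_def
    using rel_pm[OF b c] rel_dc[OF i c m] by blast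
next
  assume "hp Q (rel \<phi> M)"
  then obtain N where n: "pm Q N" "disjoint_compatible (rel \<phi> M) N" unfolding hp_def by auto
  have b': "bij_betw (inv_into P \<phi>) Q P" using b by (simp add: bij_betw_inv_into)
  have c': "cp (inv_into P \<phi>) Q" using cp_inv[OF b c] .
  have i': "inj_on (inv_into P \<phi>) Q" using b' unfolding bij_betw_def by auto
  have "pm P (rel (inv_into P \<phi>) N)" using rel_pm[OF b' c' n(1)] .
  moreover have "disjoint_compatible (rel (inv_into P \<phi>) (rel \<phi> M)) (rel (inv_into P \<phi>) N)"
    using rel_dc[OF i' c' rel_pm[OF b c m] n(1) n(2)] .
  ultimately show "hp P M" unfolding hp_def rel_inv[OF b m] by blast
qed


lemma crosses_ear: "\<not> crosses {p, Suc p} f"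
  unfolding crosses_def doubleton_eq_iff by auto

lemma crosses_ear': "\<not> crosses f {p, Suc p}"
  using crosses_ear crosses_sym by blast

lemma crosses_disj: "crosses e f \<Longrightarrow> e \<inter> f = {}"
  unfolding crosses_def by auto

lemma crosses_sep: "(\<forall>x\<in>e. \<forall>y\<in>f. x<y) \<Longrightarrow> \<not> crosses e f \<and> \<not> crosses f e"
  unfolding crosses_def by (auto simp: doubleton_eq_iff)

lemma crosses_mono:
  assumes "a<b \<longleftrightarrow> \<phi> a < \<phi> b" "b<a \<longleftrightarrow> \<phi> b < \<phi> a"
    "a<c \<longleftrightarrow> \<phi> a < \<phi> c" "c<a \<longleftrightarrow> \<phi> c < \<phi> a"
    "a<d \<longleftrightarrow> \<phi> a < \<phi> d" "d<a \<longleftrightarrow> \<phi> d < \<phi> a"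
    "b<c \<longleftrightarrow> \<phi> b < \<phi> c" "c<b \<longleftrightarrow> \<phi> c < \<phi> b"
    "b<d \<longleftrightarrow> \<phi> b < \<phi> d" "d<b \<longleftrightarrow> \<phi> d < \<phi> b"
    "c<d \<longleftrightarrow> \<phi> c < \<phi> d" "d<c \<longleftrightarrow> \<phi> d < \<phi> c"
  shows "crosses {\<phi> a, \<phi> b} {\<phi> c, \<phi> d} \<longleftrightarrow> crosses {a,b} {c,d}"
  unfolding crosses_iff by (simp only: assms[symmetric])

lemma mono_cp:
  assumes "\<And>x y. x\<in>P \<Longrightarrow> y\<in>P \<Longrightarrow> x<y \<longleftrightarrow> \<phi> x < \<phi> y"
  shows "cp \<phi> P"
  unfolding cp_def
proof (intro ballI)
  fix a b c d assume h: "a\<in>P" "b\<in>P" "c\<in>P" "d\<in>P"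
  show "crosses {\<phi> a, \<phi> b} {\<phi> c, \<phi> d} = crosses {a, b} {c, d}"
    by (rule crosses_mono; rule assms; fact h)
qed

lemma sd_bij: "bij_betw (\<lambda>p. p - c) {c..<n} {..<n-(c::nat)}"
  unfolding bij_betw_def
proof
  show "inj_on (\<lambda>p. p - c) {c..<n}" by (auto simp: inj_on_def)
  show "(\<lambda>p. p - c) ` {c..<n} = {..<n - c}"
  proof
    show "{..<n - c} \<subseteq> (\<lambda>p. p - c) ` {c..<n}"
    proof
      fix x assume "x \<in> {..<n-c}"
      then have "x + c \<in> {c..<n}" "x = x + c - c" by auto
      then show "x \<in> (\<lambda>p. p - c) ` {c..<n}" by blast
    qed
  qed auto
qed

lemma sd_cp: "cp (\<lambda>p. p - c) {(c::nat)..<n}"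
  by (rule mono_cp) auto

lemma su_bij: "bij_betw (\<lambda>p. p + c) {..<m} {c..<m+(c::nat)}"
  unfolding bij_betw_def
proof
  show "inj_on (\<lambda>p. p + c) {..<m}" by (auto simp: inj_on_def)
  show "(\<lambda>p. p + c) ` {..<m} = {c..<m+c}"
  proof
    show "{c..<m+c} \<subseteq> (\<lambda>p. p + c) ` {..<m}"
    proof
      fix x assume "x \<in> {c..<m+c}"
      then have "x - c \<in> {..<m}" "x = x - c + c" by auto
      then show "x \<in> (\<lambda>p. p + c) ` {..<m}" by blast
    qed
  qed auto
qed

lemma su_cp: "cp (\<lambda>p. p + (c::nat)) P"
  by (rule mono_cp) auto

lemma rot_eq: assumes "x < (n::nat)" shows "(x + r) mod n = (if x + r mod n < n then x + r mod n else x + r mod n - n)"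
proof -
  define r' where "r' = r mod n"
  have r': "r' < n" unfolding r'_def using assms by simp
  have "(x + r) mod n = (x + r') mod n" unfolding r'_def by (simp add: mod_add_right_eq)
  then show ?thesis using assms r' unfolding r'_def[symmetric] by (auto simp: mod_if le_mod_geq)
qed

lemma rot_bij: "bij_betw (\<lambda>p. (p + r) mod n) {..<n} {..<(n::nat)}"
proof (cases "n = 0")
  case True then show ?thesis by (simp add: bij_betw_def)
next
  case False
  have h: "\<And>x. x < n \<Longrightarrow> (x + r) mod n = (if x + r mod n < n then x + r mod n else x + r mod n - n)"
    by (rule rot_eq)
  have inj: "inj_on (\<lambda>p. (p + r) mod n) {..<n}"
  proof (rule inj_onI)
    fix x y assume "x \<in> {..<n}" "y \<in> {..<n}" "(x + r) mod n = (y + r) mod n"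
    then show "x = y" using h[of x] h[of y] False by (auto split: if_splits)
  qed
  moreover have "(\<lambda>p. (p + r) mod n) ` {..<n} \<subseteq> {..<n}" using False by auto
  ultimately have "(\<lambda>p. (p + r) mod n) ` {..<n} = {..<n}"
    using endo_inj_surj[of "{..<n}" "\<lambda>p. (p + r) mod n"] by blast
  then show ?thesis using inj unfolding bij_betw_def by blast
qed

lemma rot_cp: "cp (\<lambda>p. (p + r) mod n) {..<(n::nat)}"
  unfolding cp_def lessThan_iff using rot_cross by blast



lemma pm_restrict:
  assumes m: "pm P M" and s: "S \<subseteq> M"
  shows "pm (P - \<Union>S) (M - S)"
proof (rule pmI)
  fix e assume e: "e \<in> M - S"
  then obtain a b where ab: "a\<noteq>b" "a\<in>P" "b\<in>P" "e={a,b}" using pm_edge[OF m] by blast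
  have "a \<notin> \<Union>S" "b \<notin> \<Union>S"
    using e ab s pm_unique[OF m] by blast+
  then show "\<exists>a b. a \<noteq> b \<and> a \<in> P - \<Union>S \<and> b \<in> P - \<Union>S \<and> e = {a, b}" using ab by blast
next
  fix p assume "p \<in> P - \<Union>S"
  then obtain e where "e\<in>M" "p\<in>e" using pm_cover[OF m] by blast
  then show "\<exists>e\<in>M - S. p \<in> e" using \<open>p \<in> P - \<Union>S\<close> by blast
next
  fix e f p assume "e \<in> M - S" "f \<in> M - S" "p\<in>e" "p\<in>f"
  then show "e = f" using pm_unique[OF m] by blast
next
  fix e f assume "e \<in> M - S" "f \<in> M - S"
  then show "\<not> crosses e f" using pm_nc[OF m] by blast
qed

lemma pm_union:
  assumes a: "pm A M1" and b: "pm B M2" and d: "A \<inter> B = {}"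
    and c: "\<And>e f. e\<in>M1 \<Longrightarrow> f\<in>M2 \<Longrightarrow> \<not> crosses e f \<and> \<not> crosses f e"
  shows "pm (A \<union> B) (M1 \<union> M2)"
proof (rule pmI)
  fix e assume "e \<in> M1 \<union> M2"
  then show "\<exists>a b. a \<noteq> b \<and> a \<in> A \<union> B \<and> b \<in> A \<union> B \<and> e = {a, b}"
    using pm_edge[OF a] pm_edge[OF b] by blast
next
  fix p assume "p \<in> A \<union> B"
  then show "\<exists>e\<in>M1 \<union> M2. p \<in> e" using pm_cover[OF a] pm_cover[OF b] by blast
next
  fix e f p assume h: "e \<in> M1 \<union> M2" "f \<in> M1 \<union> M2" "p\<in>e" "p\<in>f"
  have sA: "\<And>e. e\<in>M1 \<Longrightarrow> e \<subseteq> A" and sB: "\<And>e. e\<in>M2 \<Longrightarrow> e \<subseteq> B" using pm_sub[OF a] pm_sub[OF b] by auto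
  show "e = f"
  proof (cases "e \<in> M1")
    case e1: True
    show ?thesis
    proof (cases "f \<in> M1")
      case True show ?thesis by (rule pm_unique[OF a e1 True h(3) h(4)])
    next
      case False then have "f \<in> M2" using h(2) by blast
      then have "p \<in> A \<inter> B" using sA[OF e1] sB h(3) h(4) by blast
      then show ?thesis using d by blast
    qed
  next
    case False then have e2: "e \<in> M2" using h(1) by blast
    show ?thesis
    proof (cases "f \<in> M2")
      case True show ?thesis by (rule pm_unique[OF b e2 True h(3) h(4)])
    next
      case False then have "f \<in> M1" using h(2) by blast
      then have "p \<in> A \<inter> B" using sB[OF e2] sA h(3) h(4) by blast
      then show ?thesis using d by blast
    qed
  qed
next
  fix e f assume "e \<in> M1 \<union> M2" "f \<in> M1 \<union> M2"
  then show "\<not> crosses e f" using pm_nc[OF a] pm_nc[OF b] c by blast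
qed

lemma pm_nonempty: "pm P M \<Longrightarrow> e\<in>M \<Longrightarrow> \<exists>x. x\<in>e"
  using pm_edge by blast

lemma edgeI: "a\<noteq>b \<Longrightarrow> a\<in>P \<Longrightarrow> b\<in>P \<Longrightarrow> \<exists>x y. x\<noteq>y \<and> x\<in>P \<and> y\<in>P \<and> {a,b}={x,y}"
  by blast
lemma lt4: "(p::nat) < 4 \<longleftrightarrow> p = 0 \<or> p = 1 \<or> p = 2 \<or> p = 3" by auto
lemma c4: "\<not> crosses {0,1} {2,3::nat}" "\<not> crosses {2,3} {0,1::nat}" "\<not> crosses {0,1} {0,1::nat}" "\<not> crosses {2,3} {2,3::nat}"
  "\<not> crosses {0,3} {1,2::nat}" "\<not> crosses {1,2} {0,3::nat}" "\<not> crosses {0,3} {0,3::nat}" "\<not> crosses {1,2} {1,2::nat}"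
  "\<not> crosses {0,3} {0,1::nat}" "\<not> crosses {0,3} {2,3::nat}" "\<not> crosses {1,2} {0,1::nat}" "\<not> crosses {1,2} {2,3::nat}"
  "\<not> crosses {0,1} {0,3::nat}" "\<not> crosses {2,3} {0,3::nat}" "\<not> crosses {0,1} {1,2::nat}" "\<not> crosses {2,3} {1,2::nat}"
  by (simp_all add: crosses_iff)
lemma pm4: "pm {..<4} {{0,1},{2,3}}"
proof (rule pmI)
  fix e assume "e \<in> {{0,1},{2,3::nat}}"
  then show "\<exists>a b. a \<noteq> b \<and> a \<in> {..<4} \<and> b \<in> {..<4} \<and> e = {a, b}"
    using edgeI[of 0 1 "{..<4::nat}"] edgeI[of 2 3 "{..<4::nat}"] by auto
next
  fix p assume "p \<in> {..<4::nat}"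
  then show "\<exists>e\<in>{{0, 1}, {2, 3}}. p \<in> e" unfolding lessThan_iff lt4 by auto
next
  fix e f p assume "e \<in> {{0,1},{2,3::nat}}" "f \<in> {{0,1},{2,3::nat}}" "p\<in>e" "p\<in>f"
  then show "e = f" by auto
next
  fix e f assume "e \<in> {{0,1},{2,3::nat}}" "f \<in> {{0,1},{2,3::nat}}"
  then show "\<not> crosses e f" using c4 by auto
qed
lemma pm4': "pm {..<4} {{0,3},{1,2}}"
proof (rule pmI)
  fix e assume "e \<in> {{0,3},{1,2::nat}}"
  then show "\<exists>a b. a \<noteq> b \<and> a \<in> {..<4} \<and> b \<in> {..<4} \<and> e = {a, b}"
    using edgeI[of 0 3 "{..<4::nat}"] edgeI[of 1 2 "{..<4::nat}"] by auto
next
  fix p assume "p \<in> {..<4::nat}"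
  then show "\<exists>e\<in>{{0, 3}, {1, 2}}. p \<in> e" unfolding lessThan_iff lt4 by auto
next
  fix e f p assume "e \<in> {{0,3},{1,2::nat}}" "f \<in> {{0,3},{1,2::nat}}" "p\<in>e" "p\<in>f"
  then show "e = f" by auto
next
  fix e f assume "e \<in> {{0,3},{1,2::nat}}" "f \<in> {{0,3},{1,2::nat}}"
  then show "\<not> crosses e f" using c4 by auto
qed
lemma dc4: "disjoint_compatible {{0,1},{2,3}} {{0,3},{1,2::nat}}" "disjoint_compatible {{0,3},{1,2}} {{0,1},{2,3::nat}}"
proof -
  have "{{0,1},{2,3}} \<inter> {{0,3},{1,2::nat}} = {}" by (auto simp: doubleton_eq_iff)
  then show "disjoint_compatible {{0,1},{2,3}} {{0,3},{1,2::nat}}" "disjoint_compatible {{0,3},{1,2}} {{0,1},{2,3::nat}}"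
    unfolding disjoint_compatible_def using c4 by auto
qed
lemma lift4:
  assumes r: "pm {..<n} R" and x: "X \<subseteq> R" "\<Union>X = {..<4}" and y: "pm {..<4} Y"
    and xy: "disjoint_compatible X Y" and h: "hp {4..<n} (R - X)"
  shows "hp {..<n} R"
proof -
  obtain N where n: "pm {4..<n} N" "disjoint_compatible (R - X) N" using h unfolding hp_def by blast
  have "3 \<in> \<Union>X" using x by auto
  then have "3 < n" using x r pm_sub by blast
  then have u: "{..<n} = {4..<n} \<union> {..<4}" by auto
  have rx: "pm {4..<n} (R - X)"
  proof -
    have "{..<n} - \<Union>X = {4..<n}" using x by auto
    then show ?thesis using pm_restrict[OF r x(1)] by simp
  qed
  have sep: "\<And>e f. e \<subseteq> {4..<n} \<Longrightarrow> f \<subseteq> {..<4} \<Longrightarrow> \<not> crosses e f \<and> \<not> crosses f e"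
  proof -
    fix e f assume "e \<subseteq> {4..<n}" "f \<subseteq> {..<4::nat}"
    then have "\<forall>x\<in>f. \<forall>y\<in>e. x<y" by (force simp: subset_iff)
    then show "\<not> crosses e f \<and> \<not> crosses f e" using crosses_sep by blast
  qed
  have pmN: "pm {..<n} (N \<union> Y)" unfolding u
    by (rule pm_union[OF n(1) y]) (auto intro!: sep dest: pm_sub[OF n(1)] pm_sub[OF y])
  have Xsub: "\<And>e. e\<in>X \<Longrightarrow> e \<subseteq> {..<4}" using x by blast
  have dis1: "X \<inter> N = {}"
  proof -
    { fix e assume "e\<in>X" "e\<in>N"
      then obtain z where "z\<in>e" using pm_nonempty[OF n(1)] by blast
      then have False using Xsub[OF \<open>e\<in>X\<close>] pm_sub[OF n(1) \<open>e\<in>N\<close>]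
        by (metis atLeastLessThan_iff lessThan_iff not_le subsetD) }
    then show ?thesis by blast
  qed
  have dis2: "(R - X) \<inter> Y = {}"
  proof -
    { fix e assume "e\<in>R - X" "e\<in>Y"
      then obtain z where "z\<in>e" using pm_nonempty[OF y] by blast
      then have False using pm_sub[OF y \<open>e\<in>Y\<close>] pm_sub[OF rx \<open>e\<in>R - X\<close>]
        by (metis atLeastLessThan_iff lessThan_iff not_le subsetD) }
    then show ?thesis by blast
  qed
  have "disjoint_compatible R (N \<union> Y)"
    unfolding disjoint_compatible_def
  proof (intro conjI ballI)
    show "R \<inter> (N \<union> Y) = {}"
      using dis1 dis2 xy n(2) x(1) unfolding disjoint_compatible_def by blast
  next
    fix e f assume e: "e\<in>R" and f: "f \<in> N \<union> Y"
    show "\<not> crosses e f"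
    proof (cases "e \<in> X")
      case True
      show ?thesis
      proof (cases "f \<in> Y")
        case True then show ?thesis using xy \<open>e\<in>X\<close> unfolding disjoint_compatible_def by blast
      next
        case False then have "f\<in>N" using f by blast
        then show ?thesis using sep[OF pm_sub[OF n(1) \<open>f\<in>N\<close>] Xsub[OF \<open>e\<in>X\<close>]] by blast
      qed
    next
      case False
      then have eRX: "e \<in> R - X" using e by blast
      show ?thesis
      proof (cases "f \<in> Y")
        case True then show ?thesis using sep[OF pm_sub[OF rx eRX] pm_sub[OF y True]] by blast
      next
        case False then have "f\<in>N" using f by blast
        then show ?thesis using n(2) eRX unfolding disjoint_compatible_def by blast
      qed
    qed
  qed
  then show ?thesis using pmN unfolding hp_def by blast
qed



lemma partner: "pm P M \<Longrightarrow> e\<in>M \<Longrightarrow> x\<in>e \<Longrightarrow> \<exists>y. y\<noteq>x \<and> y\<in>P \<and> e={x,y}"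
  by (drule (1) pm_edge) (auto simp: insert_commute)

lemma block_down:
  assumes r: "pm {..<n} R" and b: "{0,3}\<in>R" "{1,2}\<in>R" and m: "pm {..<n} M'"
    and d: "disjoint_compatible R M'"
  shows "{0,1}\<in>M' \<and> {2,3}\<in>M'"
proof -
  have nc: "\<And>e f. e\<in>R \<Longrightarrow> f\<in>M' \<Longrightarrow> \<not> crosses e f" and dj: "\<And>e. e\<in>R \<Longrightarrow> e\<notin>M'"
    using d unfolding disjoint_compatible_def by blast+
  have "3 < n" using pm_sub[OF r b(1)] by auto
  then have "(1::nat) \<in> {..<n}" "(2::nat) \<in> {..<n}" by auto
  obtain e1 where e1: "e1\<in>M'" "1\<in>e1" using pm_cover[OF m \<open>1\<in>{..<n}\<close>] by blast
  obtain q where q: "q\<noteq>1" "e1={1,q}" using partner[OF m e1] by blast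
  obtain e2 where e2: "e2\<in>M'" "2\<in>e2" using pm_cover[OF m \<open>2\<in>{..<n}\<close>] by blast
  obtain q2 where q2: "q2\<noteq>2" "e2={2,q2}" using partner[OF m e2] by blast
  have qn2: "q \<noteq> 2" using dj[OF b(2)] e1 q by auto
  moreover have "\<not> q > 3"
  proof
    assume "q > 3" then have "crosses {0,3} {1,q}" by (simp add: crosses_iff)
    then show False using nc[OF b(1) e1(1)] q by simp
  qed
  ultimately have qq: "q = 0 \<or> q = 3" using q by auto
  have q2n1: "q2 \<noteq> 1" using dj[OF b(2)] e2 q2 by (auto simp: insert_commute)
  moreover have "\<not> q2 > 3"
  proof
    assume "q2 > 3" then have "crosses {0,3} {2,q2}" by (simp add: crosses_iff)
    then show False using nc[OF b(1) e2(1)] q2 by simp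
  qed
  ultimately have qq2: "q2 = 0 \<or> q2 = 3" using q2 by auto
  have "e1 \<noteq> e2" using q q2 qn2 q2n1 by (auto simp: doubleton_eq_iff)
  then have ne: "q \<noteq> q2" using pm_unique[OF m e1(1) e2(1)] q q2 by auto
  have "q \<noteq> 3"
  proof
    assume "q = 3" then have "q2 = 0" using qq2 ne by auto
    then have "crosses e1 e2" using q q2 \<open>q = 3\<close> by (simp add: crosses_iff)
    then show False using pm_nc[OF m e1(1) e2(1)] by simp
  qed
  then have "q = 0" "q2 = 3" using qq qq2 ne by auto
  then show ?thesis using e1 e2 q q2 by (auto simp: insert_commute)
qed

lemma B1_union: "\<Union>{{0,1},{2,3::nat}} = {..<4}" "\<Union>{{0,3},{1,2::nat}} = {..<4}"
  unfolding lt4[symmetric, THEN eq_reflection] by auto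

lemma block_move:
  assumes r: "pm {..<n} R" and b: "{0,3}\<in>R" "{1,2}\<in>R"
  shows "hp {..<n} R \<longleftrightarrow> hp {4..<n} (R - {{0,3},{1,2}})"
proof
  assume "hp {..<n} R"
  then obtain M' where m: "pm {..<n} M'" and d: "disjoint_compatible R M'" unfolding hp_def by blast
  have bm: "{0,1}\<in>M'" "{2,3}\<in>M'" using block_down[OF r b m d] by auto
  have "3 < n" using pm_sub[OF r b(1)] by auto
  have eq: "{..<n} - \<Union>{{0,1},{2,3}} = {4..<n}" unfolding B1_union by auto
  have "pm {4..<n} (M' - {{0,1},{2,3}})" using pm_restrict[OF m, of "{{0,1},{2,3}}"] bm unfolding eq by blast
  moreover have "disjoint_compatible (R - {{0,3},{1,2}}) (M' - {{0,1},{2,3}})"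
    using d unfolding disjoint_compatible_def by blast
  ultimately show "hp {4..<n} (R - {{0,3},{1,2}})" unfolding hp_def by blast
next
  assume "hp {4..<n} (R - {{0,3},{1,2}})"
  moreover have "{{0,3},{1,2}} \<subseteq> R" using b by blast
  ultimately show "hp {..<n} R" using lift4[OF r _ B1_union(2) pm4 dc4(2)] by blast
qed

lemma ears_move:
  assumes r: "pm {..<n} R" and b: "{0,1}\<in>R" "{2,3}\<in>R"
    and h: "hp {4..<n} (R - {{0,1},{2,3}})"
  shows "hp {..<n} R"
proof -
  have "{{0,1},{2,3}} \<subseteq> R" using b by blast
  then show ?thesis using lift4[OF r _ B1_union(1) pm4' dc4(1) h] by blast
qed

lemma sd_transfer:
  assumes "pm {c..<n} X"
  shows "hp {c..<n} X \<longleftrightarrow> hp {..<n-c} (rel (\<lambda>p. p - c) X)"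
    and "pm {..<n-c} (rel (\<lambda>p. p - c) X)"
  using transfer[OF sd_bij sd_cp assms] rel_pm[OF sd_bij sd_cp assms] by auto



lemma dc_disj: "disjoint_compatible M M' \<Longrightarrow> e\<in>M \<Longrightarrow> e\<notin>M'"
  unfolding disjoint_compatible_def by auto
lemma dc_nc: "disjoint_compatible M M' \<Longrightarrow> e\<in>M \<Longrightarrow> f\<in>M' \<Longrightarrow> \<not> crosses e f"
  unfolding disjoint_compatible_def by auto

lemma swap_cross:
  assumes "3 \<le> c" "3 \<le> d" "c\<noteq>w" "d\<noteq>w" "2<(w::nat)"
  shows "crosses {0,w} {c,d} = crosses {2,w} {c,d}"
proof -
  have "0 < w" using assms by simp
  show ?thesis unfolding crosses_lt[OF \<open>0<w\<close>] crosses_lt[OF assms(5)] using assms by auto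
qed

lemma ear12: "\<not> crosses {1,2} f" "\<not> crosses f {1,2}" "\<not> crosses {0,1} f" "\<not> crosses f {0,1}"
  using crosses_ear[of 1 f] crosses_ear'[of f 1] crosses_ear[of 0 f] crosses_ear'[of f 0] by (simp_all add: numeral_2_eq_2)

lemma move2:
  assumes r: "pm {..<n} R" and b: "{0,1}\<in>R" "{2,3}\<in>R"
    and h: "hp {2..<n} (R - {{0,1}})"
  shows "hp {..<n} R"
proof -
  obtain L where L: "pm {2..<n} L" and dL: "disjoint_compatible (R - {{0,1}}) L" using h unfolding hp_def by blast
  have "3 < n" using pm_sub[OF r b(2)] by auto
  then have "(2::nat) \<in> {2..<n}" by auto
  obtain e where e: "e\<in>L" "2\<in>e" using pm_cover[OF L \<open>2\<in>{2..<n}\<close>] by blast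
  obtain w where w: "w\<noteq>2" "w\<in>{2..<n}" "e={2,w}" using partner[OF L e] by blast
  have "{2,3} \<in> R - {{0,1}}" using b by (auto simp: doubleton_eq_iff)
  then have "{2,3} \<notin> L" by (rule dc_disj[OF dL])
  then have "w \<noteq> 3" using e w by auto
  then have w4: "4 \<le> w" "w < n" using w by auto
  have Lsub: "\<And>f. f\<in>L \<Longrightarrow> f \<subseteq> {2..<n}" using pm_sub[OF L] by blast
  have Lav: "\<And>f. f\<in>L - {{2,w}} \<Longrightarrow> 0\<notin>f \<and> 1\<notin>f \<and> 2\<notin>f \<and> w\<notin>f"
  proof -
    fix f assume f: "f\<in>L - {{2,w}}"
    have "0\<notin>f" "1\<notin>f" using Lsub[of f] f by auto
    moreover have "2\<notin>f" "w\<notin>f" using pm_unique[OF L _ e(1)] f e w by auto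
    ultimately show "0\<notin>f \<and> 1\<notin>f \<and> 2\<notin>f \<and> w\<notin>f" by blast
  qed
  define M' where "M' = (L - {{2,w}}) \<union> {{1,2},{0,w}}"
  have Mc: "\<And>f. f \<in> M' \<Longrightarrow> f \<in> L - {{2,w}} \<or> f = {1,2} \<or> f = {0,w}" unfolding M'_def by auto
  have key: "\<And>g. g \<in> L - {{2,w}} \<Longrightarrow> \<not> crosses {0,w} g \<and> \<not> crosses g {0,w}"
  proof -
    fix g assume g: "g \<in> L - {{2,w}}"
    obtain c d where cd: "c\<in>{2..<n}" "d\<in>{2..<n}" "g={c,d}" using pm_edge[OF L] g by blast
    have "c\<noteq>2" "d\<noteq>2" "c\<noteq>w" "d\<noteq>w" using Lav[OF g] cd by auto
    then have "crosses {0,w} {c,d} = crosses {2,w} {c,d}" using cd w4 by (intro swap_cross) auto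
    moreover have "\<not> crosses {2,w} g" using pm_nc[OF L e(1)] g w by auto
    ultimately have "\<not> crosses {0,w} g" using cd by simp
    then show "\<not> crosses {0,w} g \<and> \<not> crosses g {0,w}" using crosses_sym by auto
  qed
  have pmM: "pm {..<n} M'"
  proof (rule pmI)
    fix f assume fM: "f \<in> M'"
    from Mc[OF fM] consider "f \<in> L - {{2,w}}" | "f = {1,2}" | "f = {0,w}" by metis
    then show "\<exists>a b. a \<noteq> b \<and> a \<in> {..<n} \<and> b \<in> {..<n} \<and> f = {a, b}"
    proof cases
      case 1
      then obtain a b where "a\<noteq>b" "a\<in>{2..<n}" "b\<in>{2..<n}" "f={a,b}" using pm_edge[OF L] by blast
      then show ?thesis by (intro exI[of _ a] exI[of _ b]) auto
    next
      case 2 then show ?thesis using \<open>3<n\<close> by (intro exI[of _ 1] exI[of _ 2]) auto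
    next
      case 3 then show ?thesis using w4 by (intro exI[of _ 0] exI[of _ w]) auto
    qed
  next
    fix p assume p: "p \<in> {..<n}"
    show "\<exists>f\<in>M'. p \<in> f"
    proof (cases "p \<in> {0,1,2,w}")
      case True then show ?thesis unfolding M'_def by auto
    next
      case False
      then have "p \<in> {2..<n}" using p by auto
      then obtain f where "f\<in>L" "p\<in>f" using pm_cover[OF L] by blast
      then have "f \<noteq> {2,w}" using False by auto
      then have "f \<in> M'" unfolding M'_def using \<open>f\<in>L\<close> by auto
      then show ?thesis using \<open>p\<in>f\<close> by (intro bexI[of _ f])
    qed
  next
    fix f g p assume f: "f \<in> M'" and g: "g \<in> M'" and pf: "p \<in> f" and pg: "p \<in> g"
    show "f = g"
    proof (cases "f \<in> L - {{2,w}}")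
      case fL: True
      show ?thesis
      proof (cases "g \<in> L - {{2,w}}")
        case True then show ?thesis using pm_unique[OF L _ _ pf pg] fL by simp
      next
        case False then have "g = {1,2} \<or> g = {0,w}" using Mc[OF g] by metis
        then show ?thesis using Lav[OF fL] pf pg by auto
      qed
    next
      case False then have ff: "f = {1,2} \<or> f = {0,w}" using Mc[OF f] by metis
      show ?thesis
      proof (cases "g \<in> L - {{2,w}}")
        case True then show ?thesis using Lav[OF True] pf pg ff by auto
      next
        case False then have "g = {1,2} \<or> g = {0,w}" using Mc[OF g] by metis
        then show ?thesis using ff pf pg w4 by auto
      qed
    qed
  next
    fix f g assume f: "f \<in> M'" and g: "g \<in> M'"
    have c00: "\<not> crosses {0,w} {0,w}" using crosses_disj by auto
    show "\<not> crosses f g"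
    proof (cases "f \<in> L - {{2,w}}")
      case fL: True
      show ?thesis
      proof (cases "g \<in> L - {{2,w}}")
        case True then show ?thesis using pm_nc[OF L] fL by simp
      next
        case False then have "g = {1,2} \<or> g = {0,w}" using Mc[OF g] by metis
        then show ?thesis using ear12 key[OF fL] by auto
      qed
    next
      case False then have ff: "f = {1,2} \<or> f = {0,w}" using Mc[OF f] by metis
      show ?thesis
      proof (cases "g \<in> L - {{2,w}}")
        case True then show ?thesis using ff ear12 key[OF True] by auto
      next
        case False then have "g = {1,2} \<or> g = {0,w}" using Mc[OF g] by metis
        then show ?thesis using ff ear12 c00 by auto
      qed
    qed
  qed
  have Rsub: "\<And>f. f\<in>R \<Longrightarrow> f \<subseteq> {..<n}" using pm_sub[OF r] by blast
  have R01: "\<And>f. f\<in>R \<Longrightarrow> f \<noteq> {0,1} \<Longrightarrow> 0\<notin>f \<and> 1\<notin>f"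
    using pm_unique[OF r _ b(1)] by auto
  have R23: "\<And>f. f\<in>R \<Longrightarrow> 2\<in>f \<Longrightarrow> f = {2,3}" using pm_unique[OF r _ b(2)] by auto
  have "disjoint_compatible R M'"
    unfolding disjoint_compatible_def
  proof (intro conjI ballI)
    show "R \<inter> M' = {}"
    proof (rule ccontr)
      assume "R \<inter> M' \<noteq> {}"
      then obtain f where f: "f\<in>R" "f\<in>M'" by blast
      show False
      proof (cases "f \<in> L - {{2,w}}")
        case True
        then have "0 \<notin> f" using Lav by auto
        then have "f \<noteq> {0,1}" by auto
        then have "f \<in> R - {{0,1}}" using f by simp
        then show False using dc_disj[OF dL] True by simp
      next
        case False then have f12: "f = {1,2} \<or> f = {0,w}" using Mc[OF f(2)] by metis
        have "{1,2} \<noteq> {0,1::nat}" "{0,w} \<noteq> {0,1::nat}" using w4 by (auto simp: doubleton_eq_iff)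
        then have "f \<noteq> {0,1}" using f12 by metis
        then have "0\<notin>f \<and> 1\<notin>f" by (rule R01[OF f(1)])
        then show False using f12 by auto
      qed
    qed
  next
    fix f g assume f: "f\<in>R" and g: "g\<in>M'"
    show "\<not> crosses f g"
    proof (cases "f = {0,1}")
      case True then show ?thesis using ear12 by simp
    next
      case fn: False
      have fR: "f \<in> R - {{0,1}}" using f fn by simp
      show ?thesis
      proof (cases "g \<in> L - {{2,w}}")
        case True then show ?thesis using dc_nc[OF dL fR] by simp
      next
        case False then have "g = {1,2} \<or> g = {0,w}" using Mc[OF g] by metis
        then show ?thesis
        proof
          assume "g = {1,2}" then show ?thesis using ear12 by simp
        next
          assume g0: "g = {0,w}"
          obtain c d where cd: "c\<in>{..<n}" "d\<in>{..<n}" "f={c,d}" "c\<noteq>d" using pm_edge[OF r f] by blast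
          show ?thesis
          proof (cases "w \<in> f")
            case True
            then have "f \<inter> g \<noteq> {}" using g0 by auto
            then show ?thesis using crosses_disj by auto
          next
            case wf: False
            show ?thesis
            proof (cases "2 \<in> f")
              case True then have "f = {2,3}" using R23 f by simp
              then show ?thesis using g0 w4 by (simp add: crosses_iff)
            next
              case False
              have "c\<noteq>0" "d\<noteq>0" "c\<noteq>1" "d\<noteq>1" using R01[OF f fn] cd by auto
              moreover have "c\<noteq>2" "d\<noteq>2" "c\<noteq>w" "d\<noteq>w" using False wf cd by auto
              ultimately have "crosses {0,w} {c,d} = crosses {2,w} {c,d}" using w4 by (intro swap_cross) auto
              moreover have "\<not> crosses f {2,w}" using dc_nc[OF dL fR] e(1) w(3) by simp
              ultimately show ?thesis using g0 cd crosses_sym by metis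
            qed
          qed
        qed
      qed
    qed
  qed
  then show ?thesis using pmM unfolding hp_def by blast
qed



lemma mstructure:
  assumes m: "pm {..<n} M" and n: "4 \<le> n"
  shows "(\<exists>p. p+3<n \<and> {p,p+3}\<in>M \<and> {p+1,p+2}\<in>M) \<or> (\<exists>a. a+3<n \<and> {a,a+1}\<in>M \<and> {a+2,a+3}\<in>M)"
proof (cases "\<exists>p q. {p,q}\<in>M \<and> p+1<q")
  case False
  have ear: "\<And>x y. {x,y}\<in>M \<Longrightarrow> x < y \<Longrightarrow> y = x+1" using False by force
  have "(0::nat)\<in>{..<n}" "(2::nat)\<in>{..<n}" using n by auto
  obtain e0 where e0: "e0\<in>M" "0\<in>e0" using pm_cover[OF m \<open>0\<in>{..<n}\<close>] by blast
  obtain y0 where y0: "y0\<noteq>0" "e0={0,y0}" using partner[OF m e0] by blast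
  have "y0 = 1" using ear[of 0 y0] e0 y0 by auto
  then have m01: "{0,1}\<in>M" using e0 y0 by simp
  obtain e2 where e2: "e2\<in>M" "2\<in>e2" using pm_cover[OF m \<open>2\<in>{..<n}\<close>] by blast
  obtain y2 where y2: "y2\<noteq>2" "e2={2,y2}" "y2\<in>{..<n}" using partner[OF m e2] by blast
  have "y2 \<noteq> 0 \<and> y2 \<noteq> 1"
  proof (rule ccontr)
    assume "\<not> (y2 \<noteq> 0 \<and> y2 \<noteq> 1)"
    then have "y2 \<in> {0,1}" by auto
    then have "e2 \<inter> {0,1} \<noteq> {}" using y2(2) by auto
    then obtain z where "z \<in> e2" "z \<in> {0,1}" by blast
    then have "e2 = {0,1}" using pm_unique[OF m e2(1) m01] by blast
    then show False using e2(2) by simp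
  qed
  then have "2 < y2" using y2 by auto
  then have "y2 = 3" using ear[of 2 y2] e2 y2 by auto
  then have "{2,3}\<in>M" using e2 y2 by simp
  then have "0+3<n \<and> {0,0+1}\<in>M \<and> {0+2,0+3}\<in>M" using m01 n by (simp add: numeral_2_eq_2)
  then show ?thesis by blast
next
  case True
  then obtain pq where "{fst pq, snd pq}\<in>M \<and> fst pq + 1 < snd pq" by auto
  then obtain pq0 where pq0: "{fst pq0, snd pq0}\<in>M \<and> fst pq0 + 1 < snd pq0"
    and minp: "\<And>z. {fst z, snd z}\<in>M \<and> fst z + 1 < snd z \<Longrightarrow> snd pq0 - fst pq0 \<le> snd z - fst z"
    using ex_has_least_nat[where P="\<lambda>z. {fst z, snd z}\<in>M \<and> fst z + 1 < snd z" and m="\<lambda>z. snd z - fst z"] by blast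
  define p where "p = fst pq0"
  define q where "q = snd pq0"
  have h: "{p,q}\<in>M" "p+1<q" using pq0 unfolding p_def q_def by auto
  have mn: "\<And>x y. {x,y}\<in>M \<Longrightarrow> x+1<y \<Longrightarrow> q - p \<le> y - x"
    using minp unfolding p_def q_def by (metis fst_conv snd_conv)
  have qn: "q < n" using pm_sub[OF m h(1)] by auto
  have inside: "\<And>x. p<x \<Longrightarrow> x<q \<Longrightarrow> \<exists>y. {x,y}\<in>M \<and> p<y \<and> y<q \<and> (y = x+1 \<or> x = y+1)"
  proof -
    fix x assume x: "p<x" "x<q"
    then have "x\<in>{..<n}" using qn by auto
    obtain e where e: "e\<in>M" "x\<in>e" using pm_cover[OF m \<open>x\<in>{..<n}\<close>] by blast
    obtain y where y: "y\<noteq>x" "e={x,y}" using partner[OF m e] by blast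
    have "y\<noteq>p"
    proof
      assume "y = p" then have "e = {p,q}" using pm_unique[OF m e(1) h(1), of p] y by simp
      then show False using e(2) x by auto
    qed
    moreover have "y\<noteq>q"
    proof
      assume "y = q" then have "e = {p,q}" using pm_unique[OF m e(1) h(1), of q] y by simp
      then show False using e(2) x by auto
    qed
    moreover have "\<not> crosses {p,q} {x,y}" using pm_nc[OF m h(1) e(1)] y by simp
    ultimately have py: "p<y" "y<q" using x y(1) crosses_lt[of p q x y] h(2) by auto
    have "y = x+1 \<or> x = y+1"
    proof (rule ccontr)
      assume "\<not> (y = x+1 \<or> x = y+1)"
      then have "x+1<y \<or> y+1<x" using y(1) by auto
      then show False
      proof
        assume "x+1<y" then show False using mn[of x y] e y py x by auto
      next
        assume "y+1<x" then show False using mn[of y x] e y py x by (auto simp: insert_commute)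
      qed
    qed
    then show "\<exists>y. {x,y}\<in>M \<and> p<y \<and> y<q \<and> (y = x+1 \<or> x = y+1)" using e y py by auto
  qed
  obtain y1 where y1: "{p+1,y1}\<in>M" "p<y1" "y1<q" "y1 = p+2 \<or> p+1 = y1+1" using inside[of "p+1"] h(2) by auto
  then have y1e: "y1 = p+2" by auto
  show ?thesis
  proof (cases "p+3 = q")
    case True
    then show ?thesis using h y1 y1e qn by (intro disjI1 exI[of _ p]) auto
  next
    case False
    then have "p+3<q" using y1 y1e by auto
    obtain y3 where y3: "{p+3,y3}\<in>M" "p<y3" "y3<q" "y3 = p+4 \<or> p+3 = y3+1" using inside[of "p+3"] \<open>p+3<q\<close> by auto
    have "y3 \<noteq> p+2"
    proof
      assume "y3 = p+2"
      then have "{p+3,y3} = {p+1,y1}" using pm_unique[OF m y3(1) y1(1), of "p+2"] y1e by auto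
      then show False using \<open>y3 = p+2\<close> y1e by (auto simp: doubleton_eq_iff)
    qed
    then have "y3 = p+4" using y3 by auto
    then have B: "{p+3,p+4}\<in>M" using y3 by simp
    have A: "{p+1,p+2}\<in>M" using y1 y1e by simp
    have C: "p+4<n" using \<open>y3 = p+4\<close> y3 qn by simp
    have e1: "p+1+1 = p+2" "p+1+2 = p+3" "p+1+3 = p+4" by simp_all
    have "p+1+3<n \<and> {p+1,p+1+1}\<in>M \<and> {p+1+2,p+1+3}\<in>M" unfolding e1 using A B C by (intro conjI)
    then show ?thesis by blast
  qed
qed


lemma rot_transfer:
  assumes "pm {..<n} M"
  shows "hp {..<n} M \<longleftrightarrow> hp {..<n} (rel (\<lambda>p. (p + r) mod n) M)"
    and "pm {..<n} (rel (\<lambda>p. (p + r) mod n) M)"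
  using transfer[OF rot_bij rot_cp assms] rel_pm[OF rot_bij rot_cp assms] by auto

lemma rot_pt: "a \<le> n \<Longrightarrow> j < n \<Longrightarrow> (a + j + (n - a)) mod n = (j::nat)"
proof -
  assume "a \<le> n" "j < n"
  then have "a + j + (n - a) = j + n" by simp
  then show ?thesis using \<open>j<n\<close> by simp
qed

lemma rel_pair: "rel \<phi> {{a,b},{c,d}} = {{\<phi> a, \<phi> b}, {\<phi> c, \<phi> d}}"
  unfolding rel_def by simp

lemma rel_mem: "e \<in> M \<Longrightarrow> \<phi> ` e \<in> rel \<phi> M"
  unfolding rel_def by simp

lemma rel_diff:
  assumes i: "inj_on \<phi> P" and m: "pm P M" and b: "B \<subseteq> M"
  shows "rel \<phi> (M - B) = rel \<phi> M - rel \<phi> B"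
proof -
  have "inj_on (\<lambda>e. \<phi> ` e) M"
  proof (rule inj_onI)
    fix e f assume "e\<in>M" "f\<in>M" "\<phi> ` e = \<phi> ` f"
    then show "e = f" using pm_sub[OF m] i by (metis inj_on_image_eq_iff)
  qed
  then show ?thesis unfolding rel_def using b by (simp add: inj_on_image_set_diff)
qed

lemma ears_anywhere:
  assumes m: "pm {..<n} M" and a: "a+3<n" and e: "{a,a+1}\<in>M" "{a+2,a+3}\<in>M" and nh: "\<not> hp {..<n} M"
  shows "pm {..<n-4} (rel (\<lambda>p. p - 4) (rel (\<lambda>p. (p + (n - a)) mod n) M - {{0,1},{2,3}}))
    \<and> \<not> hp {..<n-4} (rel (\<lambda>p. p - 4) (rel (\<lambda>p. (p + (n - a)) mod n) M - {{0,1},{2,3}}))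
    \<and> pm {..<n-2} (rel (\<lambda>p. p - 2) (rel (\<lambda>p. (p + (n - a)) mod n) M - {{0,1}}))
    \<and> \<not> hp {..<n-2} (rel (\<lambda>p. p - 2) (rel (\<lambda>p. (p + (n - a)) mod n) M - {{0,1}}))"
proof -
  define R where "R = rel (\<lambda>p. (p + (n - a)) mod n) M"
  have r: "pm {..<n} R" "\<not> hp {..<n} R" using rot_transfer[OF m, of "n - a"] nh unfolding R_def by auto
  have "a \<le> n" using a by simp
  have "(\<lambda>p. (p + (n - a)) mod n) ` {a,a+1} = {0,1}"
    using rot_pt[OF \<open>a\<le>n\<close>, of 0] rot_pt[OF \<open>a\<le>n\<close>, of 1] a by simp
  then have r01: "{0,1} \<in> R" using rel_mem[OF e(1)] unfolding R_def by metis
  have "(\<lambda>p. (p + (n - a)) mod n) ` {a+2,a+3} = {2,3}"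
    using rot_pt[OF \<open>a\<le>n\<close>, of 2] rot_pt[OF \<open>a\<le>n\<close>, of 3] a by (simp add: add.assoc)
  then have r23: "{2,3} \<in> R" using rel_mem[OF e(2)] unfolding R_def by metis
  have u1: "{..<n} - \<Union>{{0,1},{2,3}} = {4..<n}" unfolding B1_union by auto
  have p4: "pm {4..<n} (R - {{0,1},{2,3}})" using pm_restrict[OF r(1), of "{{0,1},{2,3}}"] r01 r23 unfolding u1 by blast
  have h4: "\<not> hp {4..<n} (R - {{0,1},{2,3}})" using ears_move[OF r(1) r01 r23] r(2) by blast
  have u2: "{..<n} - \<Union>{{0,1}} = {2..<n}" by auto
  have p2: "pm {2..<n} (R - {{0,1}})" using pm_restrict[OF r(1), of "{{0,1}}"] r01 unfolding u2 by blast
  have h2: "\<not> hp {2..<n} (R - {{0,1}})" using move2[OF r(1) r01 r23] r(2) by blast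
  show ?thesis using sd_transfer[OF p4] sd_transfer[OF p2] h4 h2 unfolding R_def[symmetric] by blast
qed



lemma mod_sub4: assumes "4 \<le> x mod n" shows "(x + n - 4) mod n = x mod (n::nat) - 4"
proof (cases "n = 0")
  case True then show ?thesis by simp
next
  case False
  have d: "x = x div n * n + x mod n" by simp
  have lt: "x mod n < n" using False by simp
  have "x + n - 4 = (x mod n - 4) + Suc (x div n) * n" using assms d by (simp add: algebra_simps; linarith)
  then have "(x + n - 4) mod n = ((x mod n - 4) + Suc (x div n) * n) mod n" by (rule arg_cong)
  also have "\<dots> = (x mod n - 4) mod n" by (rule mod_mult_self1)
  also have "\<dots> = x mod n - 4" using lt by simp
  finally show ?thesis .
qed

lemma block_images:
  assumes i: "i < 2*k" and k: "2 \<le> k"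
  shows "rel (\<lambda>p. (p + (2*k - i)) mod (2*k)) (block_edges k i) = {{0,3},{1,2}}"
proof -
  let ?n = "2*k"
  have il: "i \<le> ?n" using i by simp
  have im: "i mod ?n = i" using i by simp
  have h: "\<And>j. j < ?n \<Longrightarrow> ((i + j) mod ?n + (?n - i)) mod ?n = j"
  proof -
    fix j assume "j < ?n"
    have "((i + j) mod ?n + (?n - i)) mod ?n = (i + j + (?n - i)) mod ?n" by (simp add: mod_add_left_eq)
    also have "\<dots> = j" using rot_pt[OF il \<open>j < ?n\<close>] .
    finally show "((i + j) mod ?n + (?n - i)) mod ?n = j" .
  qed
  have "(i mod ?n + (?n - i)) mod ?n = 0" using h[of 0] k by simp
  moreover have "((i+1) mod ?n + (?n - i)) mod ?n = 1" using h[of 1] k by simp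
  moreover have "((i+2) mod ?n + (?n - i)) mod ?n = 2" using h[of 2] k by simp
  moreover have "((i+3) mod ?n + (?n - i)) mod ?n = 3" using h[of 3] k by simp
  ultimately show ?thesis unfolding block_edges_def rel_pair by simp
qed

lemma block_general:
  assumes k: "2 \<le> k" and m: "pm {..<2*k} N" and i: "i < 2*k" and b: "block_edges k i \<subseteq> N"
  shows "pm {..<2*k-4} (remove_block k i s N) \<and> (hp {..<2*k} N \<longleftrightarrow> hp {..<2*k-4} (remove_block k i s N))"
proof -
  define n where "n = 2*k"
  define \<phi> where "\<phi> = (\<lambda>p. (p + (n - i)) mod n)"
  define R where "R = rel \<phi> N"
  have r: "pm {..<n} R" "hp {..<n} N \<longleftrightarrow> hp {..<n} R"
    using rot_transfer[OF m[folded n_def], of "n - i"] unfolding R_def \<phi>_def by auto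
  have bi: "rel \<phi> (block_edges k i) = {{0,3},{1,2}}" using block_images[OF i k] unfolding \<phi>_def n_def .
  have "rel \<phi> (block_edges k i) \<subseteq> R" unfolding R_def rel_def using b by auto
  then have b0: "{0,3} \<in> R" "{1,2} \<in> R" unfolding bi by auto
  have inj: "inj_on \<phi> {..<n}" using rot_bij unfolding bij_betw_def \<phi>_def by blast
  have RX: "R - {{0,3},{1,2}} = rel \<phi> (N - block_edges k i)"
    unfolding R_def rel_diff[OF inj m[folded n_def] b] bi ..
  have u1: "{..<n} - \<Union>{{0,3},{1,2}} = {4..<n}" unfolding B1_union by auto
  have p4: "pm {4..<n} (R - {{0,3},{1,2}})" using pm_restrict[OF r(1), of "{{0,3},{1,2}}"] b0 unfolding u1 by blast
  define X where "X = rel (\<lambda>p. p - 4) (R - {{0,3},{1,2}})"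
  have x: "pm {..<n-4} X" "hp {4..<n} (R - {{0,3},{1,2}}) \<longleftrightarrow> hp {..<n-4} X"
    using sd_transfer[OF p4] unfolding X_def by auto
  define Y where "Y = rel (\<lambda>p. (p + s) mod (n-4)) X"
  have y: "pm {..<n-4} Y" "hp {..<n-4} X \<longleftrightarrow> hp {..<n-4} Y"
    using rot_transfer[OF x(1), of s] unfolding Y_def by auto
  have eqY: "Y = remove_block k i s N"
  proof -
    have "Y = rel ((\<lambda>p. (p + s) mod (n-4)) \<circ> (\<lambda>p. p - 4) \<circ> \<phi>) (N - block_edges k i)"
      unfolding Y_def X_def RX rel_rel comp_assoc by (rule refl)
    also have "\<dots> = rel (shrink k i s) (N - block_edges k i)"
      unfolding rel_def
    proof (rule image_cong[OF refl])
      fix e assume e: "e \<in> N - block_edges k i"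
      have "\<phi> ` e \<in> R - {{0,3},{1,2}}" unfolding RX using e by (rule rel_mem)
      then have ge: "\<phi> ` e \<subseteq> {4..<n}" by (rule pm_sub[OF p4])
      have en: "e \<subseteq> {..<n}" using e by (intro pm_sub[OF m[folded n_def]]) simp
      show "((\<lambda>p. (p + s) mod (n-4)) \<circ> (\<lambda>p. p - 4) \<circ> \<phi>) ` e = shrink k i s ` e"
      proof (rule image_cong[OF refl])
        fix p assume p: "p \<in> e"
        have g4: "4 \<le> (p + (n - i)) mod n" using ge p unfolding \<phi>_def by auto
        have "p + 4*k - i - 4 = (p + (n - i)) + n - 4" using i k unfolding n_def by simp
        then have e1: "(p + 4*k - i - 4) mod n = (p + (n - i)) mod n - 4"
          using mod_sub4[OF g4] by simp
        have "shrink k i s p = ((p + 4*k - i - 4) mod n + s) mod (n - 4)"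
          unfolding shrink_def n_def by (rule refl)
        also have "\<dots> = (((p + (n - i)) mod n - 4) + s) mod (n - 4)" unfolding e1 by (rule refl)
        also have "\<dots> = ((\<lambda>p. (p + s) mod (n-4)) \<circ> (\<lambda>p. p - 4) \<circ> \<phi>) p"
          unfolding \<phi>_def comp_def by (rule refl)
        finally show "((\<lambda>p. (p + s) mod (n-4)) \<circ> (\<lambda>p. p - 4) \<circ> \<phi>) p = shrink k i s p" by (rule sym)
      qed
    qed
    finally show ?thesis unfolding remove_block_def rel_def .
  qed
  show ?thesis using r(2) block_move[OF r(1) b0] x y eqY unfolding n_def by simp
qed



lemma I_odd: assumes "I_matching k M" shows "odd k"
  using assms
proof (cases rule: I_matching.cases)
  case base then show ?thesis by simp
next
  case (step i s) then show ?thesis by metis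
qed

lemma pm0: "pm {..<0} M \<Longrightarrow> M = {}"
  unfolding pm_def by auto

lemma pm_empty: "pm {} {}"
  unfolding pm_def by auto

lemma pm1: "pm {..<2} M \<Longrightarrow> M = {{0,1}}"
proof -
  assume m: "pm {..<2} M"
  have all: "\<And>e. e\<in>M \<Longrightarrow> e = {0,1}"
  proof -
    fix e assume "e\<in>M"
    then obtain a b where "a\<noteq>b" "a<2" "b<2" "e={a,b}" using pm_edge[OF m] by blast
    then show "e = {0,1}" by (cases a; cases b) auto
  qed
  have "(0::nat) \<in> {..<2}" by simp
  then obtain e where "e\<in>M" using pm_cover[OF m] by blast
  then show "M = {{0,1}}" using all by blast
qed

lemma pm01: "pm {..<2} {{0,1}}"
proof (rule pmI)
  fix p assume "p \<in> {..<2::nat}"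
  then have "p = 0 \<or> p = 1" by auto
  then show "\<exists>e\<in>{{0,1}}. p \<in> e" by blast
next
  fix e assume "e \<in> {{0,1::nat}}"
  then have "e = {0,1}" by simp
  moreover have "(0::nat) \<noteq> 1 \<and> (0::nat) \<in> {..<2} \<and> (1::nat) \<in> {..<2}" by simp
  ultimately show "\<exists>a b. a \<noteq> b \<and> a \<in> {..<2} \<and> b \<in> {..<2} \<and> e = {a, b}" by blast
next
  fix e f p assume "e \<in> {{0,1::nat}}" "f \<in> {{0,1::nat}}"
  then show "e = f" by simp
next
  fix e f assume "e \<in> {{0,1::nat}}" "f \<in> {{0,1::nat}}"
  then have "e = {0,1}" "f = {0,1}" by simp_all
  moreover have "\<not> crosses {0,1} {0,1::nat}" using crosses_ear[of 0 "{0,1}"] by simp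
  ultimately show "\<not> crosses e f" by simp
qed

lemma general: "pm {..<2*k} M \<Longrightarrow> (\<not> hp {..<2*k} M \<longleftrightarrow> I_matching k M)"
proof (induction k arbitrary: M rule: less_induct)
  case (less k)
  note m = less.prems
  show ?case
  proof (cases "k = 0")
    case True
    then have "M = {}" using pm0 m by simp
    moreover have "hp {..<2*k} {}" unfolding hp_def disjoint_compatible_def using True pm_empty by auto
    moreover have "\<not> I_matching k M" using True I_odd by fastforce
    ultimately show ?thesis by simp
  next
    case k0: False
    show ?thesis
    proof (cases "k = 1")
      case True
      then have M: "M = {{0,1}}" using pm1 m by simp
      have "\<not> hp {..<2*k} M"
      proof
        assume "hp {..<2*k} M"
        then obtain M' where m2: "pm {..<2} M'" and d: "disjoint_compatible M M'" unfolding hp_def using True by auto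
        have "M' = {{0,1}}" by (rule pm1[OF m2])
        then have "{0,1} \<in> M'" by simp
        moreover have "{0,1} \<in> M" using M by simp
        ultimately show False using dc_disj[OF d] by blast
      qed
      moreover have "I_matching k M" using True M I_matching.base by simp
      ultimately show ?thesis by simp
    next
      case False
      then have k2: "2 \<le> k" using k0 by simp
      have n4: "2*k-4 = 2*(k-2)" by simp
      show ?thesis
      proof
        assume I: "I_matching k M"
        then show "\<not> hp {..<2*k} M"
        proof cases
          case base then show ?thesis using False by simp
        next
          case (step i s)
          have bg: "pm {..<2*k-4} (remove_block k i s M) \<and> (hp {..<2*k} M \<longleftrightarrow> hp {..<2*k-4} (remove_block k i s M))"
            using block_general[OF k2 m step(4) step(5)] .
          have "k - 2 < k" using k2 by simp
          moreover have "pm {..<2*(k-2)} (remove_block k i s M)" using bg unfolding n4 by simp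
          ultimately have "\<not> hp {..<2*(k-2)} (remove_block k i s M) \<longleftrightarrow> I_matching (k-2) (remove_block k i s M)"
            by (rule less.IH)
          then have "\<not> hp {..<2*(k-2)} (remove_block k i s M)" using step(6) by simp
          then show ?thesis using bg unfolding n4 by simp
        qed
      next
        assume nh: "\<not> hp {..<2*k} M"
        have "4 \<le> 2*k" using k2 by simp
        from mstructure[OF m this] show "I_matching k M"
        proof
          assume "\<exists>p. p+3<2*k \<and> {p,p+3}\<in>M \<and> {p+1,p+2}\<in>M"
          then obtain p where p: "p+3<2*k" "{p,p+3}\<in>M" "{p+1,p+2}\<in>M" by blast
          have be: "block_edges k p = {{p,p+3},{p+1,p+2}}" unfolding block_edges_def using p(1) by simp
          then have bs: "block_edges k p \<subseteq> M" using p by simp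
          have pl: "p < 2*k" using p by simp
          have bg: "pm {..<2*k-4} (remove_block k p 0 M) \<and> (hp {..<2*k} M \<longleftrightarrow> hp {..<2*k-4} (remove_block k p 0 M))"
            using block_general[OF k2 m pl bs] .
          have "k - 2 < k" using k2 by simp
          moreover have "pm {..<2*(k-2)} (remove_block k p 0 M)" using bg unfolding n4 by simp
          ultimately have "\<not> hp {..<2*(k-2)} (remove_block k p 0 M) \<longleftrightarrow> I_matching (k-2) (remove_block k p 0 M)"
            by (rule less.IH)
          moreover have "\<not> hp {..<2*(k-2)} (remove_block k p 0 M)" using bg nh unfolding n4 by simp
          ultimately have Irb: "I_matching (k-2) (remove_block k p 0 M)" by simp
          then have o2: "odd (k-2)" by (rule I_odd)
          have ok1: "odd k" using o2 k2 by presburger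
          have ok2: "3 \<le> k" using o2 k2 by presburger
          note ok = ok1 ok2
          have "is_matching k M" using m is_matching_pm by simp
          then show "I_matching k M" using I_matching.step[OF ok(1) ok(2) _ pl bs Irb] by simp
        next
          assume "\<exists>a. a+3<2*k \<and> {a,a+1}\<in>M \<and> {a+2,a+3}\<in>M"
          then obtain a where a: "a+3<2*k" "{a,a+1}\<in>M" "{a+2,a+3}\<in>M" by blast
          note ea = ears_anywhere[OF m a(1) a(2) a(3) nh]
          have n2: "2*k-2 = 2*(k-1)" by simp
          have lt: "k - 2 < k" "k - 1 < k" using k2 by simp_all
          have "pm {..<2*(k-2)} (rel (\<lambda>p. p - 4) (rel (\<lambda>p. (p + (2*k - a)) mod (2*k)) M - {{0,1},{2,3}}))"
            using ea unfolding n4 by simp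
          from less.IH[OF lt(1) this] ea have "I_matching (k-2) (rel (\<lambda>p. p - 4) (rel (\<lambda>p. (p + (2*k - a)) mod (2*k)) M - {{0,1},{2,3}}))"
            unfolding n4 by simp
          then have o1: "odd (k-2)" by (rule I_odd)
          have "pm {..<2*(k-1)} (rel (\<lambda>p. p - 2) (rel (\<lambda>p. (p + (2*k - a)) mod (2*k)) M - {{0,1}}))"
            using ea unfolding n2 by simp
          from less.IH[OF lt(2) this] ea have "I_matching (k-1) (rel (\<lambda>p. p - 2) (rel (\<lambda>p. (p + (2*k - a)) mod (2*k)) M - {{0,1}}))"
            unfolding n2 by simp
          then have o2: "odd (k-1)" by (rule I_odd)
          show "I_matching k M" using o1 o2 k2 by presburger
        qed
      qed
    qed
  qed
qed

theorem mainTheorem11: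
  fixes k :: nat and M :: "nat set set"
  assumes "odd k" and "is_matching k M"
  shows "isolated_DCM k M \<longleftrightarrow> I_matching k M"
proof -
  have m: "pm {..<2*k} M" using assms(2) is_matching_pm by simp
  have "isolated_DCM k M \<longleftrightarrow> \<not> (\<exists>M'. is_matching k M' \<and> disjoint_compatible M M')"
    unfolding isolated_DCM_def using assms(2) by (simp only: simp_thms)
  also have "\<dots> \<longleftrightarrow> \<not> hp {..<2*k} M" unfolding hp_def is_matching_pm by (rule refl)
  finally have "isolated_DCM k M \<longleftrightarrow> \<not> hp {..<2*k} M" .
  then show ?thesis using general[OF m] by simp
qed


end
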